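(* Let $X \subseteq 2^\omega$ be nice. Then for every Borel function $x \mapsto f^x$ from $2^\omega$ to $\omega^\omega$ there exists a strictly increasing sequence $\{n_k : k \in \omega\}$ of natural numbers such that for every $x \in X$ there are infinitely many $k$ with $f^x(n_k) < n_{k+1}$.
   Context: A set $X \subseteq 2^\omega$ is nice if for every Borel function $x \mapsto f^x$ from $2^\omega$ to $\omega^\omega$ there exists $g \in \omega^\omega$ such that for every $x \in X$ there are infinitely many $n$ with $f^x(n) = g(n)$. *)

theory Defs
  imports "HOL-Analysis.Analysis"
begin

text \<open>Cantor space 2^omega is nat => bool, Baire space omega^omega is nat => nat,
 both with the product topology (Function_Topology) of the discrete (order) topologies
 on bool and nat; Borel functions are maps measurable w.r.t. the Borel sigma-algebras.\<close>

definition nice :: "(nat \<Rightarrow> bool) set \<Rightarrow> bool" where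
  "nice X \<longleftrightarrow>
     (\<forall>f \<in> measurable (borel :: (nat \<Rightarrow> bool) measure) (borel :: (nat \<Rightarrow> nat) measure).
        \<exists>g :: nat \<Rightarrow> nat. \<forall>x \<in> X. infinite {n. f x n = g n})"

end

theory Submission
  imports Defs
begin

lemma nat_borel_cs: "measurable M (borel :: nat measure) = measurable M (count_space UNIV)"
  by (rule measurable_cong_sets[OF refl]) (simp add: sets_borel_eq_count_space)

lemma nat_borel_cs2: "(g \<in> measurable M (borel :: nat measure)) = (g \<in> measurable M (count_space UNIV))"
  using nat_borel_cs by metis

lemma comb_part:
  fixes F :: "(nat \<Rightarrow> bool) \<Rightarrow> nat \<Rightarrow> nat" and f :: "(nat \<Rightarrow> bool) \<Rightarrow> nat \<Rightarrow> nat"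
  defines "h \<equiv> \<lambda>x m. (\<Sum>i\<le>m. f x i) + m + 1"
  assumes g: "\<forall>x \<in> X. infinite {m. h x (h x m) = g m}"
  shows "\<exists>n :: nat \<Rightarrow> nat. strict_mono n \<and>
           (\<forall>x \<in> X. infinite {k. f x (n k) < n (Suc k)})"
proof -
  define n where "n = rec_nat (0::nat) (\<lambda>k nk. (\<Sum>i\<le>nk. g i) + nk + 1)"
  have n0: "n 0 = 0" and nS: "\<And>k. n (Suc k) = (\<Sum>i\<le>n k. g i) + n k + 1"
    by (simp_all add: n_def)
  have sm: "strict_mono n" by (rule strict_monoI_Suc) (simp add: nS)
  have gb: "g m < n (Suc k)" if "m \<le> n k" for m k
  proof -
    have "g m \<le> (\<Sum>i\<le>n k. g i)" using that by (intro member_le_sum) auto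
    then show ?thesis by (simp add: nS)
  qed
  have hge: "f x i < h x m" if "i \<le> m" for x i m
  proof -
    have "f x i \<le> (\<Sum>i\<le>m. f x i)" using that by (intro member_le_sum) auto
    then show ?thesis by (simp add: h_def)
  qed
  have hmono: "h x a \<le> h x b" if "a \<le> b" for x a b
  proof -
    have "sum (f x) {..a} \<le> sum (f x) {..b}" using that by (intro sum_mono2) auto
    then show ?thesis using that unfolding h_def by simp
  qed
  have "infinite {k. f x (n k) < n (Suc k)}" if x: "x \<in> X" for x
    unfolding infinite_nat_iff_unbounded_le
  proof
    fix K
    obtain m where m: "m \<ge> n K" "h x (h x m) = g m"
      using g x unfolding infinite_nat_iff_unbounded_le by blast
    have ex: "\<exists>k. m < n k" using seq_suble[OF sm, of "Suc m"] by (intro exI[of _ "Suc m"]) simp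
    define k' where "k' = (LEAST k. m < n k)"
    have k'1: "m < n k'" unfolding k'_def by (rule LeastI_ex[OF ex])
    have k'0: "k' \<noteq> 0" by (metis k'1 n0 not_less0)
    then obtain k where kk: "k' = Suc k" using not0_implies_Suc by blast
    have k2: "n k \<le> m" using not_less_Least[of k "\<lambda>k. m < n k"] kk unfolding k'_def by auto
    have k1: "m < n (Suc k)" using k'1 kk by simp
    have kK: "K \<le> k"
    proof (rule ccontr)
      assume "\<not> K \<le> k"
      then have "Suc k \<le> K" by simp
      then have "n (Suc k) \<le> n K" using sm by (simp add: strict_mono_less_eq)
      then show False using k1 m(1) by simp
    qed
    show "\<exists>k\<ge>K. k \<in> {k. f x (n k) < n (Suc k)}"
    proof (cases "f x (n k) < n (Suc k)")
      case True then show ?thesis using kK by auto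
    next
      case False
      have "n (Suc k) \<le> f x (n k)" using False by simp
      also have "\<dots> < h x m" using hge k2 by blast
      finally have "h x (n (Suc k)) \<le> h x (h x m)" using hmono by simp
      then have "f x (n (Suc k)) < h x (h x m)" using hge[of "n (Suc k)" "n (Suc k)" x] by simp
      also have "\<dots> = g m" by (rule m(2))
      also have "\<dots> < n (Suc (Suc k))" using k1 by (intro gb) simp
      finally show ?thesis using kK by (intro exI[of _ "Suc k"]) auto
    qed
  qed
  then show ?thesis using sm by blast
qed

theorem lemma2p6:
  fixes X :: "(nat \<Rightarrow> bool) set"
    and f :: "(nat \<Rightarrow> bool) \<Rightarrow> (nat \<Rightarrow> nat)"
  assumes "nice X"
    and "f \<in> measurable (borel :: (nat \<Rightarrow> bool) measure) (borel :: (nat \<Rightarrow> nat) measure)"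
  shows "\<exists>n :: nat \<Rightarrow> nat. strict_mono n \<and>
           (\<forall>x \<in> X. infinite {k. f x (n k) < n (Suc k)})"
proof -
  define h where "h \<equiv> \<lambda>x m. (\<Sum>i\<le>m. f x i) + m + (1::nat)"
  have PB: "sets (Pi\<^sub>M UNIV (\<lambda>_. borel :: nat measure)) = sets (borel :: (nat \<Rightarrow> nat) measure)"
    by (rule sets_PiM_equal_borel)
  have fP: "f \<in> measurable borel (Pi\<^sub>M UNIV (\<lambda>_. borel :: nat measure))"
    by (subst measurable_cong_sets[OF refl PB]) (rule assms(2))
  have fi: "(\<lambda>x. f x i) \<in> measurable borel (count_space UNIV)" for i
  proof -
    have A: "(\<lambda>x. f x i) \<in> measurable borel borel"
      using measurable_component_singleton'[OF fP measurable_ident, of i] by simp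
    show ?thesis using A[unfolded nat_borel_cs] .
  qed
  have hm: "(\<lambda>x. h x m) \<in> measurable borel (count_space UNIV)" for m
  proof -
    have A: "(\<lambda>x. h x m) \<in> borel_measurable borel"
      unfolding h_def using fi[unfolded nat_borel_cs2[symmetric]] by measurable
    show ?thesis using A[unfolded nat_borel_cs] .
  qed
  define F where "F = (\<lambda>x m. h x (h x m))"
  have Fm: "F \<in> measurable borel (borel :: (nat \<Rightarrow> nat) measure)"
  proof -
    have "(\<lambda>x m. F x m) \<in> measurable borel (Pi\<^sub>M UNIV (\<lambda>_. borel :: nat measure))"
    proof (rule measurable_PiM_single')
      fix m :: nat
      have "(\<lambda>x. h x (h x m)) \<in> measurable borel (count_space UNIV)"
        by (rule measurable_compose_countable'[where f="\<lambda>j x. h x j", OF hm hm]) simp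
      then show "(\<lambda>x. F x m) \<in> measurable borel borel" unfolding nat_borel_cs F_def .
    qed simp
    then show ?thesis unfolding measurable_cong_sets[OF refl PB] by simp
  qed
  obtain g where g: "\<forall>x \<in> X. infinite {m. F x m = g m}"
    using assms(1) Fm unfolding nice_def by blast
  show ?thesis
    by (rule comb_part[of X f g]) (use g in \<open>simp add: F_def h_def\<close>)
qed

end
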